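(* Let $p>0$ and $a_k=k^p$, $k\ge1$. Then $\lim_{N\to\infty}E[U_j^N]=I(\alpha;j)<\infty$ for all $j\ge2$.
   Context: For $N\ge2$, coupon type $k\in\{1,\dots,N\}$ has probability $a_k/\sum_{i=1}^Na_i$; $U_j^N$ is the number of empty album places of the $j$-th collector when the first collector completes her set (each collector passes duplicates to the next one), with $$E[U_j^N]=\sum_{k=1}^N\int_0^\infty a_k e^{-a_k t}\frac{(a_kt)^{j-1}}{(j-1)!}\prod_{i\ne k,\,1\le i\le N}\big(1-e^{-a_i t}\big)\,dt.$$ $x_\alpha:=\inf\{x\in[0,1]:\sum_k x^{a_k}=\infty\}$, $L(x;\alpha;j):=\sum_{k}a_k^j\frac{x^{a_k}}{1-x^{a_k}}$, $F(x;\alpha):=\prod_{k}(1-x^{a_k})$, $I(\alpha;j):=\frac{1}{(j-1)!}\int_0^{x_\alpha}L(x;\alpha;j)F(x;\alpha)|\ln x|^{j-1}\frac{dx}{x}$. *)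

theory Defs
  imports "HOL-Analysis.Analysis"
begin

text \<open>The weights are a sequence a :: nat => real, used only at indices k >= 1.\<close>

definition EU :: "(nat \<Rightarrow> real) \<Rightarrow> nat \<Rightarrow> nat \<Rightarrow> real" where
  "EU a N j = (\<Sum>k\<in>{1..N}. LBINT t:{0..}.
      a k * exp (- a k * t) * (a k * t) ^ (j - 1) / fact (j - 1)
      * (\<Prod>i\<in>{1..N} - {k}. (1 - exp (- a i * t))))"

definition x_alpha :: "(nat \<Rightarrow> real) \<Rightarrow> real" where
  "x_alpha a = Inf {x \<in> {0..1}. \<not> summable (\<lambda>k. x powr a (Suc k))}"

definition Lfun :: "(nat \<Rightarrow> real) \<Rightarrow> real \<Rightarrow> nat \<Rightarrow> real" where
  "Lfun a x j = (\<Sum>k. a (Suc k) ^ j * x powr a (Suc k) / (1 - x powr a (Suc k)))"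

definition Ffun :: "(nat \<Rightarrow> real) \<Rightarrow> real \<Rightarrow> real" where
  "Ffun a x = (\<Prod>k. 1 - x powr a (Suc k))"

definition Iint_integrand :: "(nat \<Rightarrow> real) \<Rightarrow> nat \<Rightarrow> real \<Rightarrow> real" where
  "Iint_integrand a j x = Lfun a x j * Ffun a x * \<bar>ln x\<bar> ^ (j - 1) / x"

definition Iint :: "(nat \<Rightarrow> real) \<Rightarrow> nat \<Rightarrow> real" where
  "Iint a j = 1 / fact (j - 1) * (LBINT x:{0<..<x_alpha a}. Iint_integrand a j x)"

end

theory Submission
  imports Defs "HOL-Probability.Distributions"
begin

lemma exp_ge_term:
  fixes z :: real assumes "0 \<le> z"
  shows "z ^ m / fact m \<le> exp z"
proof -
  have s: "summable (\<lambda>n. z ^ n / fact n)"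
    using summable_exp[of z] by (simp add: divide_inverse mult.commute)
  have "exp z = (\<Sum>n. z ^ n / fact n)"
    by (simp add: exp_def scaleR_conv_of_real divide_inverse mult.commute)
  moreover have "(\<Sum>n\<in>{m}. z ^ n / fact n) \<le> (\<Sum>n. z ^ n / fact n)"
    using s assms by (intro sum_le_suminf) auto
  ultimately show ?thesis by simp
qed

lemma exp_neg_le_pow:
  fixes z :: real assumes "0 < z"
  shows "exp (- z) \<le> fact m / z ^ m"
proof -
  have "z ^ m / fact m \<le> exp z" using exp_ge_term assms by simp
  hence "z ^ m \<le> fact m * exp z" by (simp add: field_simps)
  thus ?thesis using assms by (simp add: exp_minus field_simps)
qed

lemma summable_pow_exp:
  fixes p t :: real assumes p: "0 < p" and t: "0 < t"
  shows "summable (\<lambda>k. (real (Suc k) powr p) ^ r * exp (- (real (Suc k) powr p) * t))"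
proof -
  define m where "m = r + nat \<lceil>2 / p\<rceil>"
  define C where "C = fact m / t ^ m"
  have C0: "C \<ge> 0" unfolding C_def using t by simp
  have bound: "(real (Suc k) powr p) ^ r * exp (- (real (Suc k) powr p) * t)
        \<le> C * inverse (real (Suc k) ^ 2)" for k
  proof -
    define y where "y = real (Suc k) powr p"
    have y1: "y \<ge> 1" unfolding y_def using p by (simp add: ge_one_powr_ge_zero)
    have "exp (- (y * t)) \<le> fact m / (y * t) ^ m"
      using exp_neg_le_pow[of "y*t" m] y1 t by simp
    hence "y ^ r * exp (- y * t) \<le> y ^ r * (fact m / (y * t) ^ m)"
      using y1 by (intro mult_left_mono) auto
    also have "\<dots> = C * (y ^ r / y ^ m)"
      unfolding C_def by (simp add: power_mult_distrib mult_ac)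
    also have "y ^ r / y ^ m = inverse (y ^ (m - r))"
      using y1 by (simp add: m_def power_add field_simps)
    also have "y ^ (m - r) = real (Suc k) powr (real (m - r) * p)"
      unfolding y_def by (simp add: powr_power)
    also have "C * inverse (real (Suc k) powr (real (m - r) * p)) \<le> C * inverse (real (Suc k) ^ 2)"
    proof -
      have "real (Suc k) powr 2 \<le> real (Suc k) powr (real (m - r) * p)"
      proof (rule powr_mono)
        have "real (m - r) = real (nat \<lceil>2 / p\<rceil>)" by (simp add: m_def)
        also have "\<dots> \<ge> 2 / p" by linarith
        finally show "2 \<le> real (m - r) * p" using p by (metis pos_divide_le_eq)
      qed simp
      moreover have "real (Suc k) powr 2 = real (Suc k) ^ 2"
        by (rule powr_numeral) simp
      ultimately have "real (Suc k) ^ 2 \<le> real (Suc k) powr (real (m - r) * p)" by simp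
      hence "inverse (real (Suc k) powr (real (m - r) * p)) \<le> inverse (real (Suc k) ^ 2)"
        by (rule le_imp_inverse_le) simp
      thus ?thesis using C0 by (rule mult_left_mono)
    qed
    finally show ?thesis unfolding y_def by simp
  qed
  have "summable (\<lambda>n. inverse (real n ^ 2))" by (rule inverse_power_summable) simp
  hence "summable (\<lambda>k. inverse (real (Suc k) ^ 2))"
    by (rule iffD2[OF summable_Suc_iff])
  hence s: "summable (\<lambda>k. C * inverse (real (Suc k) ^ 2))"
    by (rule summable_mult)
  show ?thesis
  proof (rule summable_comparison_test'[OF s])
    fix k :: nat
    have "0 \<le> (real (Suc k) powr p) ^ r * exp (- (real (Suc k) powr p) * t)" by simp
    thus "norm ((real (Suc k) powr p) ^ r * exp (- (real (Suc k) powr p) * t)) \<le> C * inverse (real (Suc k) ^ 2)"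
      using bound[of k] by (simp only: real_norm_def abs_of_nonneg)
  qed
qed

lemma sum_1N: "(\<Sum>k\<in>{1..N}. f k) = (\<Sum>k<N. f (Suc k))"
  by (induction N) (auto simp: atLeastAtMostSuc_conv add.commute)

lemma prod_1N: "(\<Prod>k\<in>{1..N}. f k) = (\<Prod>k<N. f (Suc k))"
  by (induction N) (auto simp: atLeastAtMostSuc_conv mult.commute)

lemma exp_powr_eq: "exp (x::real) powr b = exp (b * x)"
  by (simp add: powr_def)

lemma a_ge1: "p > 0 \<Longrightarrow> real (Suc k) powr p \<ge> 1"
  by (simp add: ge_one_powr_ge_zero)

lemma x_alpha_eq:
  assumes p: "p > 0"
  shows "x_alpha (\<lambda>k. real k powr p) = 1"
proof -
  have "{x \<in> {0..1}. \<not> summable (\<lambda>k. x powr (real (Suc k) powr p))} = {1}"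
  proof (intro equalityI subsetI)
    fix x assume x: "x \<in> {x \<in> {0..1}. \<not> summable (\<lambda>k. x powr (real (Suc k) powr p))}"
    show "x \<in> {1}"
    proof (rule ccontr)
      assume "x \<notin> {1}"
      with x have x01: "0 \<le> x" "x < 1" by auto
      show False
      proof (cases "x = 0")
        case True thus False using x by simp
      next
        case False
        hence xp: "x > 0" using x01 by simp
        define t where "t = - ln x"
        have t: "t > 0" using xp x01 unfolding t_def by simp
        have "summable (\<lambda>k. (real (Suc k) powr p) ^ 0 * exp (- (real (Suc k) powr p) * t))"
          by (rule summable_pow_exp[OF p t])
        moreover have "x powr (real (Suc k) powr p) = (real (Suc k) powr p) ^ 0 * exp (- (real (Suc k) powr p) * t)" for k
          using xp by (simp add: powr_def t_def)
        ultimately show False using x by simp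
      qed
    qed
  next
    fix x assume "x \<in> {1::real}"
    thus "x \<in> {x \<in> {0..1}. \<not> summable (\<lambda>k. x powr (real (Suc k) powr p))}"
      by (simp add: summable_const_iff)
  qed
  thus ?thesis unfolding x_alpha_def by simp
qed

definition Eg :: "nat \<Rightarrow> real \<Rightarrow> real \<Rightarrow> real" where
  "Eg n l t = l * exp (- l * t) * (l * t) ^ n / fact n"

definition gN :: "real \<Rightarrow> nat \<Rightarrow> nat \<Rightarrow> real \<Rightarrow> real" where
  "gN p n N t = (\<Sum>k\<in>{1..N}. Eg n (real k powr p) t *
      (\<Prod>i\<in>{1..N} - {k}. (1 - exp (- (real i powr p) * t))))"

definition Gf :: "real \<Rightarrow> nat \<Rightarrow> real \<Rightarrow> real" where
  "Gf p n t = Lfun (\<lambda>k. real k powr p) (exp (- t)) (Suc n) *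
      Ffun (\<lambda>k. real k powr p) (exp (- t)) * t ^ n / fact n"

definition ell :: "real \<Rightarrow> nat \<Rightarrow> real \<Rightarrow> nat \<Rightarrow> real" where
  "ell p n t k = (real k powr p) ^ Suc n * exp (- (real k powr p) * t) / (1 - exp (- (real k powr p) * t))"

lemma Ffun_exp:
  "Ffun (\<lambda>k. real k powr p) (exp (- t)) = prodinf (\<lambda>k. 1 - exp (- (real (Suc k) powr p) * t))"
  by (simp add: Ffun_def exp_powr_eq)

lemma Lfun_exp:
  "Lfun (\<lambda>k. real k powr p) (exp (- t)) (Suc n) = suminf (\<lambda>k. ell p n t (Suc k))"
  unfolding Lfun_def ell_def by (simp add: exp_powr_eq)

lemma prod_conv:
  assumes p: "p > 0" and t: "t > 0"
  shows "(\<lambda>N. \<Prod>i\<in>{1..N}. (1 - exp (- (real i powr p) * t)))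
           \<longlonglongrightarrow> Ffun (\<lambda>k. real k powr p) (exp (- t))"
proof -
  define f where "f k = 1 - exp (- (real (Suc k) powr p) * t)" for k
  have "summable (\<lambda>k. (real (Suc k) powr p) ^ 0 * exp (- (real (Suc k) powr p) * t))"
    by (rule summable_pow_exp[OF p t])
  hence "summable (\<lambda>i. norm (f i - 1))" unfolding f_def by simp
  hence cp: "convergent_prod f"
    by (intro abs_convergent_prod_imp_convergent_prod summable_imp_abs_convergent_prod)
  have "(\<lambda>N. \<Prod>i\<le>N. f i) \<longlonglongrightarrow> prodinf f"
    by (rule convergent_prod_LIMSEQ[OF cp])
  hence "(\<lambda>N. \<Prod>i<Suc N. f i) \<longlonglongrightarrow> prodinf f"
    by (simp add: lessThan_Suc_atMost)
  hence "(\<lambda>N. \<Prod>i<N. f i) \<longlonglongrightarrow> prodinf f"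
    by (rule LIMSEQ_imp_Suc)
  thus ?thesis unfolding Ffun_exp prod_1N f_def by simp
qed

lemma ell_summable:
  assumes p: "p > 0" and t: "t > 0"
  shows "summable (\<lambda>k. ell p n t (Suc k))"
proof -
  have s: "summable (\<lambda>k. (real (Suc k) powr p) ^ Suc n * exp (- (real (Suc k) powr p) * t) / (1 - exp (- t)))"
    using summable_pow_exp[OF p t, of "Suc n"] by (rule summable_divide)
  have d: "0 < 1 - exp (- t)" using t by simp
  show ?thesis
  proof (rule summable_comparison_test'[OF s])
    fix k :: nat
    define A where "A = real (Suc k) powr p"
    have A1: "A \<ge> 1" unfolding A_def using a_ge1[OF p] .
    have "exp (- A * t) \<le> exp (- t)" using A1 t by (simp add: mult_left_mono)
    hence le: "1 - exp (- t) \<le> 1 - exp (- A * t)" by simp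
    have "ell p n t (Suc k) = A ^ Suc n * exp (- A * t) / (1 - exp (- A * t))"
      unfolding ell_def A_def ..
    also have "\<dots> \<le> A ^ Suc n * exp (- A * t) / (1 - exp (- t))"
      using A1 d le by (intro divide_left_mono) auto
    finally have "ell p n t (Suc k) \<le> A ^ Suc n * exp (- A * t) / (1 - exp (- t))" .
    moreover have "ell p n t (Suc k) \<ge> 0"
      unfolding ell_def using A1 t le d unfolding A_def[symmetric] by (intro divide_nonneg_pos) auto
    ultimately show "norm (ell p n t (Suc k)) \<le> (real (Suc k) powr p) ^ Suc n * exp (- (real (Suc k) powr p) * t) / (1 - exp (- t))"
      unfolding A_def by simp
  qed
qed

lemma aux_cancel: "(x::real) \<noteq> 0 \<Longrightarrow> x * (c * (z / x)) = c * z"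
  by simp

lemma gN_eq:
  assumes p: "p > 0" and t: "t > 0"
  shows "gN p n N t = (\<Prod>i\<in>{1..N}. (1 - exp (- (real i powr p) * t))) *
            (t ^ n / fact n * (\<Sum>k<N. ell p n t (Suc k)))"
proof -
  define Q where "Q = (\<Prod>i\<in>{1..N}. (1 - exp (- (real i powr p) * t)))"
  have pos: "0 < 1 - exp (- (real k powr p) * t)" if "k \<ge> 1" for k
  proof -
    have "real k powr p > 0" using that by simp
    thus ?thesis using t by simp
  qed
  have trm: "Eg n (real k powr p) t * (\<Prod>i\<in>{1..N} - {k}. (1 - exp (- (real i powr p) * t)))
      = Q * (t ^ n / fact n * ell p n t k)" if k: "k \<in> {1..N}" for k
  proof -
    have "Q = (1 - exp (- (real k powr p) * t)) * (\<Prod>i\<in>{1..N} - {k}. (1 - exp (- (real i powr p) * t)))"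
      unfolding Q_def using k by (subst prod.remove[of _ k]) auto
    moreover have "Eg n (real k powr p) t = (1 - exp (- (real k powr p) * t)) * (t ^ n / fact n * ell p n t k)"
    proof -
      have ne: "1 - exp (- (real k powr p) * t) \<noteq> 0" using pos[of k] k t by simp
      have "Eg n (real k powr p) t = t ^ n / fact n * ((real k powr p) ^ Suc n * exp (- (real k powr p) * t))"
        unfolding Eg_def by (simp add: power_mult_distrib mult_ac)
      also have "\<dots> = (1 - exp (- (real k powr p) * t)) * (t ^ n / fact n * ell p n t k)"
        unfolding ell_def using ne by (simp add: aux_cancel)
      finally show ?thesis .
    qed
    ultimately show ?thesis by (simp add: mult_ac)
  qed
  have "gN p n N t = (\<Sum>k\<in>{1..N}. Q * (t ^ n / fact n * ell p n t k))"
    unfolding gN_def by (rule sum.cong[OF refl trm])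
  also have "\<dots> = Q * (t ^ n / fact n * (\<Sum>k\<in>{1..N}. ell p n t k))"
    by (simp add: sum_distrib_left)
  finally show ?thesis unfolding Q_def sum_1N .
qed

lemma g_conv:
  assumes p: "p > 0" and t: "t > 0"
  shows "(\<lambda>N. gN p n N t) \<longlonglongrightarrow> Gf p n t"
proof -
  have "(\<lambda>N. (\<Prod>i\<in>{1..N}. (1 - exp (- (real i powr p) * t))) *
            (t ^ n / fact n * (\<Sum>k<N. ell p n t (Suc k))))
     \<longlonglongrightarrow> Ffun (\<lambda>k. real k powr p) (exp (- t)) * (t ^ n / fact n * suminf (\<lambda>k. ell p n t (Suc k)))"
    by (intro tendsto_mult prod_conv[OF p t] tendsto_const summable_LIMSEQ ell_summable[OF p t])
  thus ?thesis
    unfolding gN_eq[OF p t, abs_def] Gf_def Lfun_exp by (simp add: mult_ac)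
qed


definition qk :: "real \<Rightarrow> nat \<Rightarrow> nat \<Rightarrow> real \<Rightarrow> real" where
  "qk p n k t = Eg n (real k powr p) t * (\<Prod>i\<in>{1..<k}. (1 - exp (- (real i powr p) * t)))"

definition Hd :: "real \<Rightarrow> nat \<Rightarrow> real \<Rightarrow> real" where
  "Hd p n t = (\<Sum>k. qk p n (Suc k) t)"

lemma prod_sub_le:
  fixes f :: "'a \<Rightarrow> real"
  assumes "finite A" "B \<subseteq> A" "\<And>x. x \<in> A \<Longrightarrow> 0 \<le> f x \<and> f x \<le> 1"
  shows "prod f A \<le> prod f B"
proof -
  have "prod f A = prod f (A - B) * prod f B" using assms by (intro prod.subset_diff) auto
  also have "\<dots> \<le> 1 * prod f B"
    using assms by (intro mult_right_mono prod_le_1 prod_nonneg) auto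
  finally show ?thesis by simp
qed

lemma Eg_nonneg: "0 \<le> l \<Longrightarrow> 0 \<le> t \<Longrightarrow> 0 \<le> Eg n l t"
  unfolding Eg_def by simp

lemma fac01: "0 \<le> t \<Longrightarrow> 0 \<le> 1 - exp (- (real i powr p) * t) \<and> 1 - exp (- (real i powr p) * t) \<le> (1::real)"
  by simp

lemma gN_nonneg: "0 \<le> t \<Longrightarrow> 0 \<le> gN p n N t"
  unfolding gN_def by (intro sum_nonneg mult_nonneg_nonneg Eg_nonneg prod_nonneg) (auto simp: fac01)

lemma qk_nonneg: "0 \<le> t \<Longrightarrow> 0 \<le> qk p n k t"
  unfolding qk_def by (intro mult_nonneg_nonneg Eg_nonneg prod_nonneg) (auto simp: fac01)

lemma qk_le_Eg: "0 \<le> t \<Longrightarrow> qk p n k t \<le> Eg n (real k powr p) t"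
  unfolding qk_def using prod_le_1[of "{1..<k}" "\<lambda>i. 1 - exp (- (real i powr p) * t)"]
  by (intro mult_left_le Eg_nonneg) (auto simp: fac01)

lemma qk_summable:
  assumes p: "p > 0" and t: "t > 0"
  shows "summable (\<lambda>k. qk p n (Suc k) t)"
proof -
  have s: "summable (\<lambda>k. (real (Suc k) powr p) ^ Suc n * exp (- (real (Suc k) powr p) * t) * (t ^ n / fact n))"
    using summable_pow_exp[OF p t, of "Suc n"] by (rule summable_mult2)
  show ?thesis
  proof (rule summable_comparison_test'[OF s])
    fix k :: nat
    have "norm (qk p n (Suc k) t) = qk p n (Suc k) t" using qk_nonneg[of t] t by simp
    also have "\<dots> \<le> Eg n (real (Suc k) powr p) t" using qk_le_Eg[of t] t by (simp del: of_nat_Suc)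
    also have "\<dots> = (real (Suc k) powr p) ^ Suc n * exp (- (real (Suc k) powr p) * t) * (t ^ n / fact n)"
      unfolding Eg_def by (simp add: power_mult_distrib mult_ac)
    finally show "norm (qk p n (Suc k) t) \<le> (real (Suc k) powr p) ^ Suc n * exp (- (real (Suc k) powr p) * t) * (t ^ n / fact n)" .
  qed
qed

lemma gN_le_Hd:
  assumes p: "p > 0" and t: "t > 0"
  shows "gN p n N t \<le> Hd p n t"
proof -
  have "gN p n N t \<le> (\<Sum>k\<in>{1..N}. qk p n k t)"
    unfolding gN_def qk_def
  proof (rule sum_mono)
    fix k assume k: "k \<in> {1..N}"
    show "Eg n (real k powr p) t * (\<Prod>i\<in>{1..N} - {k}. 1 - exp (- (real i powr p) * t))
        \<le> Eg n (real k powr p) t * (\<Prod>i\<in>{1..<k}. 1 - exp (- (real i powr p) * t))"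
      using k t by (intro mult_left_mono prod_sub_le Eg_nonneg) (auto simp: fac01)
  qed
  also have "\<dots> = (\<Sum>k<N. qk p n (Suc k) t)" by (rule sum_1N)
  also have "\<dots> \<le> Hd p n t"
    unfolding Hd_def using qk_summable[OF p t] qk_nonneg[of t] t
    by (intro sum_le_suminf) auto
  finally show ?thesis .
qed


lemma Eg_measurable[measurable]: "(\<lambda>t. Eg n l t) \<in> borel_measurable borel"
  unfolding Eg_def by measurable

lemma erl_int:
  assumes l: "l > 0"
  shows "(\<integral>\<^sup>+t. ennreal (indicator {0..} t * Eg n l t) \<partial>lborel) = 1"
proof -
  have "(\<integral>\<^sup>+ x. ennreal (erlang_density n l x * x ^ 0) \<partial>lborel) = fact (n + 0) / (fact n * l ^ 0)"
    by (rule nn_integral_erlang_ith_moment[OF l])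
  moreover have "erlang_density n l x * x ^ 0 = indicator {0..} x * Eg n l x" for x
    unfolding erlang_density_def Eg_def by (auto simp: power_mult_distrib mult_ac indicator_def)
  ultimately show ?thesis by simp
qed

lemma qk_int_le1:
  assumes p: "p > 0" and k: "k \<ge> 1"
  shows "(\<integral>\<^sup>+t. ennreal (indicator {0<..} t * qk p n k t) \<partial>lborel) \<le> 1"
proof -
  have "(\<integral>\<^sup>+t. ennreal (indicator {0<..} t * qk p n k t) \<partial>lborel)
      \<le> (\<integral>\<^sup>+t. ennreal (indicator {0..} t * Eg n (real k powr p) t) \<partial>lborel)"
    by (intro nn_integral_mono ennreal_leI) (auto simp: indicator_def qk_le_Eg Eg_nonneg)
  also have "\<dots> = 1" using k by (intro erl_int) simp
  finally show ?thesis .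
qed

lemma aux_inv: "(E::real) \<noteq> 0 \<Longrightarrow> c / (M * inverse E) = c * E / M"
  by (simp add: divide_inverse mult_ac)

lemma qk_pointwise:
  assumes p: "p > 0" and t: "t > 0" and m1: "1 \<le> m" and mk: "m < k"
    and am: "real m powr p \<le> real k powr p / 4"
  shows "qk p n k t \<le> 2 ^ (n + 2) / (real m) ^ 2 * Eg n (real k powr p / 2) t"
proof -
  define A where "A = real k powr p"
  have A0: "A > 0" using mk unfolding A_def by simp
  define y where "y = exp (- (A / 4) * t)"
  have y0: "0 < y" "y \<le> 1" unfolding y_def using A0 t by auto
  have "(\<Prod>i\<in>{1..<k}. (1 - exp (- (real i powr p) * t))) \<le> (\<Prod>i\<in>{1..m}. (1 - exp (- (real i powr p) * t)))"
    using mk t by (intro prod_sub_le) (auto simp: fac01)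
  also have "\<dots> \<le> (\<Prod>i\<in>{1..m}. (1 - y))"
  proof (rule prod_mono)
    fix i assume i: "i \<in> {1..m}"
    have "real i powr p \<le> real m powr p" using i p by (intro powr_mono2) auto
    hence "real i powr p \<le> A / 4" using am unfolding A_def by simp
    hence "exp (- (A / 4) * t) \<le> exp (- (real i powr p) * t)" using t by (simp add: mult_right_mono)
    thus "0 \<le> 1 - exp (- (real i powr p) * t) \<and> 1 - exp (- (real i powr p) * t) \<le> 1 - y"
      unfolding y_def using t by simp
  qed
  also have "\<dots> = (1 - y) ^ m" by simp
  also have "\<dots> \<le> exp (- y) ^ m"
    using y0 exp_ge_add_one_self[of "- y"] by (intro power_mono) auto
  also have "\<dots> = exp (- (real m * y))" by (simp add: exp_of_nat_mult[symmetric])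
  also have "\<dots> \<le> fact 2 / (real m * y) ^ 2"
    using m1 y0 by (intro exp_neg_le_pow) auto
  also have "\<dots> = 2 * exp ((A / 2) * t) / (real m) ^ 2"
  proof -
    have "y ^ 2 = exp (- (A / 2) * t)" unfolding y_def by (simp add: power2_eq_square exp_add[symmetric])
    hence e: "y ^ 2 = inverse (exp ((A / 2) * t))" by (simp add: exp_minus)
    have "fact 2 / (real m * y) ^ 2 = 2 / ((real m) ^ 2 * inverse (exp ((A / 2) * t)))"
      unfolding power_mult_distrib e by simp
    also have "\<dots> = 2 * exp ((A / 2) * t) / (real m) ^ 2" by (rule aux_inv) simp
    finally show ?thesis .
  qed
  finally have P: "(\<Prod>i\<in>{1..<k}. (1 - exp (- (real i powr p) * t))) \<le> 2 * exp ((A / 2) * t) / (real m) ^ 2" .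
  have "qk p n k t \<le> Eg n A t * (2 * exp ((A / 2) * t) / (real m) ^ 2)"
    unfolding qk_def A_def[symmetric] using P A0 t by (intro mult_left_mono Eg_nonneg) auto
  also have "Eg n A t * exp ((A / 2) * t) = 2 ^ (n + 1) * Eg n (A / 2) t"
  proof -
    have "exp (- A * t) * exp ((A / 2) * t) = exp (- (A / 2) * t)" by (simp add: exp_add[symmetric])
    thus ?thesis unfolding Eg_def by (simp add: power_mult_distrib field_simps)
  qed
  hence "Eg n A t * (2 * exp ((A / 2) * t) / (real m) ^ 2) = 2 ^ (n + 2) / (real m) ^ 2 * Eg n (A / 2) t"
    by (simp add: field_simps)
  finally show ?thesis unfolding A_def .
qed


lemma cc_facts:
  assumes p: "p > 0"
  shows "0 < (4::real) powr (-1/p)" "(4::real) powr (-1/p) < 1" "((4::real) powr (-1/p)) powr p = 1/4"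
proof -
  show "0 < (4::real) powr (-1/p)" by simp
  show "(4::real) powr (-1/p) < 1" using p by (intro powr_less_one) auto
  have "((4::real) powr (-1/p)) powr p = 4 powr (-1/p * p)" by (simp add: powr_powr)
  also have "\<dots> = 4 powr (-1)" using p by simp
  also have "\<dots> = 1/4" by (simp add: powr_minus)
  finally show "((4::real) powr (-1/p)) powr p = 1/4" .
qed

lemma qk_int_big:
  assumes p: "p > 0" and ck: "2 \<le> (4::real) powr (-1/p) * real k"
  shows "(\<integral>\<^sup>+t. ennreal (indicator {0<..} t * qk p n k t) \<partial>lborel)
           \<le> ennreal (2 ^ (n + 4) / (((4::real) powr (-1/p)) ^ 2 * (real k) ^ 2))"
proof -
  define c where "c = (4::real) powr (-1/p)"
  note cf = cc_facts[OF p, folded c_def]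
  have ck': "2 \<le> c * real k" using ck unfolding c_def .
  define m where "m = nat \<lfloor>c * real k\<rfloor>"
  have k0: "real k > 0" using ck' cf by (cases "k = 0") auto
  have mle: "real m \<le> c * real k" unfolding m_def using ck' by linarith
  have mge: "c * real k / 2 \<le> real m" unfolding m_def using ck' by linarith
  have m1: "1 \<le> m" using mge ck' by linarith
  have mk: "m < k"
  proof -
    have "c * real k < 1 * real k" using cf k0 by (intro mult_strict_right_mono) auto
    thus ?thesis using mle by linarith
  qed
  have am: "real m powr p \<le> real k powr p / 4"
  proof -
    have "real m powr p \<le> (c * real k) powr p" using mle p by (intro powr_mono2) auto
    also have "\<dots> = c powr p * real k powr p" using cf k0 by (simp add: powr_mult)
    finally show ?thesis using cf by simp
  qed
  define B where "B = 2 ^ (n + 2) / (real m) ^ 2"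
  have B0: "B \<ge> 0" unfolding B_def by simp
  have "(\<integral>\<^sup>+t. ennreal (indicator {0<..} t * qk p n k t) \<partial>lborel)
      \<le> (\<integral>\<^sup>+t. ennreal B * ennreal (indicator {0..} t * Eg n (real k powr p / 2) t) \<partial>lborel)"
  proof (intro nn_integral_mono)
    fix t :: real
    show "ennreal (indicator {0<..} t * qk p n k t)
        \<le> ennreal B * ennreal (indicator {0..} t * Eg n (real k powr p / 2) t)"
    proof (cases "t > 0")
      case True
      have "qk p n k t \<le> B * Eg n (real k powr p / 2) t"
        unfolding B_def by (rule qk_pointwise[OF p True m1 mk am])
      thus ?thesis using True B0 by (simp add: ennreal_mult[symmetric] Eg_nonneg)
    next
      case False thus ?thesis by simp
    qed
  qed
  also have "\<dots> = ennreal B * (\<integral>\<^sup>+t. ennreal (indicator {0..} t * Eg n (real k powr p / 2) t) \<partial>lborel)"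
    by (intro nn_integral_cmult) measurable
  also have "\<dots> = ennreal B" using k0 by (subst erl_int) auto
  also have "ennreal B \<le> ennreal (2 ^ (n + 4) / (c ^ 2 * (real k) ^ 2))"
  proof (intro ennreal_leI)
    have "(c * real k / 2) ^ 2 \<le> (real m) ^ 2" using mge ck' by (intro power_mono) auto
    hence "c ^ 2 * (real k) ^ 2 / 4 \<le> (real m) ^ 2" by (simp add: power_mult_distrib power_divide)
    moreover have "0 < c ^ 2 * (real k) ^ 2" using cf k0 by simp
    moreover have "0 < (real m) ^ 2" using m1 by simp
    ultimately have "2 ^ (n + 2) / (real m) ^ 2 \<le> 2 ^ (n + 2) / (c ^ 2 * (real k) ^ 2 / 4)"
      by (intro divide_left_mono mult_pos_pos) auto
    also have "\<dots> = 2 ^ (n + 4) / (c ^ 2 * (real k) ^ 2)" by (simp add: power_add)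
    finally show "B \<le> 2 ^ (n + 4) / (c ^ 2 * (real k) ^ 2)" unfolding B_def .
  qed
  finally show ?thesis unfolding c_def .
qed


lemma qk_measurable[measurable]: "(\<lambda>t. qk p n k t) \<in> borel_measurable borel"
  unfolding qk_def by measurable

lemma Hd_measurable[measurable]: "(\<lambda>t. Hd p n t) \<in> borel_measurable borel"
  unfolding Hd_def by measurable

definition Bd :: "real \<Rightarrow> nat \<Rightarrow> nat \<Rightarrow> real" where
  "Bd p n k = (if 2 \<le> (4::real) powr (-1/p) * real k
      then 2 ^ (n + 4) / (((4::real) powr (-1/p)) ^ 2 * (real k) ^ 2) else 1)"

lemma Bd_summable:
  assumes p: "p > 0"
  shows "summable (\<lambda>k. Bd p n (Suc k))"
proof -
  define c where "c = (4::real) powr (-1/p)"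
  note cf = cc_facts[OF p, folded c_def]
  have "summable (\<lambda>n. inverse (real n ^ 2))" by (rule inverse_power_summable) simp
  hence "summable (\<lambda>k. inverse (real (Suc k) ^ 2))"
    by (rule iffD2[OF summable_Suc_iff])
  hence s: "summable (\<lambda>k. 2 ^ (n + 4) / c ^ 2 * inverse (real (Suc k) ^ 2))"
    by (rule summable_mult)
  have ev: "\<forall>\<^sub>F k in sequentially. Bd p n (Suc k) = 2 ^ (n + 4) / c ^ 2 * inverse (real (Suc k) ^ 2)"
    unfolding eventually_sequentially
  proof (intro exI allI impI)
    fix k assume k: "nat \<lceil>2 / c\<rceil> \<le> k"
    have "2 / c \<le> real (Suc k)" using k by linarith
    hence "2 \<le> c * real (Suc k)" using cf by (simp add: field_simps)
    thus "Bd p n (Suc k) = 2 ^ (n + 4) / c ^ 2 * inverse (real (Suc k) ^ 2)"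
      unfolding Bd_def c_def[symmetric] by (simp add: divide_inverse mult_ac del: of_nat_Suc)
  qed
  show ?thesis using summable_cong[OF ev] s by simp
qed

lemma qk_int_Bd:
  assumes p: "p > 0" and k: "k \<ge> 1"
  shows "(\<integral>\<^sup>+t. ennreal (indicator {0<..} t * qk p n k t) \<partial>lborel) \<le> ennreal (Bd p n k)"
  using qk_int_big[OF p] qk_int_le1[OF p k] unfolding Bd_def by auto

lemma Hd_nonneg: "p > 0 \<Longrightarrow> t > 0 \<Longrightarrow> 0 \<le> Hd p n t"
  unfolding Hd_def by (intro suminf_nonneg qk_summable qk_nonneg) auto

lemma Hd_integrable:
  assumes p: "p > 0"
  shows "integrable lborel (\<lambda>t. indicator {0<..} t * Hd p n t)"
proof (rule integrableI_nonneg)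
  show "(\<lambda>t. indicator {0<..} t * Hd p n t) \<in> borel_measurable lborel" by measurable
  show "AE t in lborel. 0 \<le> indicator {0<..} t * Hd p n t"
    using Hd_nonneg[OF p] by (auto simp: indicator_def)
  have eq: "ennreal (indicator {0<..} t * Hd p n t) = (\<Sum>k. ennreal (indicator {0<..} t * qk p n (Suc k) t))" for t
  proof (cases "t > 0")
    case True
    have "(\<Sum>k. ennreal (qk p n (Suc k) t)) = ennreal (\<Sum>k. qk p n (Suc k) t)"
      using True by (intro suminf_ennreal2 qk_summable[OF p] qk_nonneg) auto
    thus ?thesis using True unfolding Hd_def by simp
  next
    case False thus ?thesis by simp
  qed
  have "(\<integral>\<^sup>+t. ennreal (indicator {0<..} t * Hd p n t) \<partial>lborel)
      = (\<integral>\<^sup>+t. (\<Sum>k. ennreal (indicator {0<..} t * qk p n (Suc k) t)) \<partial>lborel)"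
    by (simp add: eq)
  also have "\<dots> = (\<Sum>k. \<integral>\<^sup>+t. ennreal (indicator {0<..} t * qk p n (Suc k) t) \<partial>lborel)"
    by (intro nn_integral_suminf) measurable
  also have "\<dots> \<le> (\<Sum>k. ennreal (Bd p n (Suc k)))"
    by (intro suminf_le summableI qk_int_Bd[OF p]) auto
  also have "\<dots> = ennreal (\<Sum>k. Bd p n (Suc k))"
    by (intro suminf_ennreal2 Bd_summable[OF p]) (auto simp: Bd_def)
  also have "\<dots> < \<infinity>" by simp
  finally show "(\<integral>\<^sup>+t. ennreal (indicator {0<..} t * Hd p n t) \<partial>lborel) < \<infinity>" .
qed


lemma gN_measurable[measurable]: "(\<lambda>t. gN p n N t) \<in> borel_measurable borel"
  unfolding gN_def by measurable

lemma Gf_lim: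
  assumes p: "p > 0"
  shows "(\<lambda>N. indicator {0<..} t * gN p n N t) \<longlonglongrightarrow> indicator {0<..} t * Gf p n t"
proof (cases "t > 0")
  case True
  thus ?thesis using g_conv[OF p True] by (simp add: indicator_def)
next
  case False thus ?thesis by (simp add: indicator_def)
qed

lemma Gf_measurable:
  assumes p: "p > 0"
  shows "(\<lambda>t. indicator {0<..} t * Gf p n t) \<in> borel_measurable lborel"
  by (rule borel_measurable_LIMSEQ_real[OF Gf_lim[OF p]]) measurable

lemma DCT:
  assumes p: "p > 0"
  shows "integrable lborel (\<lambda>t. indicator {0<..} t * Gf p n t)"
    and "(\<lambda>N. LINT t|lborel. indicator {0<..} t * gN p n N t) \<longlonglongrightarrow> (LINT t|lborel. indicator {0<..} t * Gf p n t)"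
proof -
  have bound: "AE t in lborel. norm (indicator {0<..} t * gN p n N t) \<le> indicator {0<..} t * Hd p n t" for N
  proof (intro AE_I2)
    fix t :: real
    show "norm (indicator {0<..} t * gN p n N t) \<le> indicator {0<..} t * Hd p n t"
    proof (cases "t > 0")
      case True
      thus ?thesis using gN_le_Hd[OF p True] gN_nonneg[of t] by (simp add: indicator_def)
    qed (simp add: indicator_def)
  qed
  show "integrable lborel (\<lambda>t. indicator {0<..} t * Gf p n t)"
    by (rule integrable_dominated_convergence[OF Gf_measurable[OF p] _ Hd_integrable[OF p] AE_I2[OF Gf_lim[OF p]] bound]) measurable
  show "(\<lambda>N. LINT t|lborel. indicator {0<..} t * gN p n N t) \<longlonglongrightarrow> (LINT t|lborel. indicator {0<..} t * Gf p n t)"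
    by (rule integral_dominated_convergence[OF Gf_measurable[OF p] _ Hd_integrable[OF p] AE_I2[OF Gf_lim[OF p]] bound]) measurable
qed

lemma Eg_integrable:
  assumes l: "l > 0"
  shows "integrable lborel (\<lambda>t. indicator {0..} t * Eg n l t)"
proof (rule integrableI_nonneg)
  show "(\<lambda>t. indicator {0..} t * Eg n l t) \<in> borel_measurable lborel" by measurable
  show "AE t in lborel. 0 \<le> indicator {0..} t * Eg n l t"
    using l by (auto simp: indicator_def Eg_nonneg)
  show "(\<integral>\<^sup>+t. ennreal (indicator {0..} t * Eg n l t) \<partial>lborel) < \<infinity>"
    using erl_int[OF l] by simp
qed

lemma EU_eq:
  assumes p: "p > 0" and n: "n \<ge> 1"
  shows "EU (\<lambda>k. real k powr p) N (Suc n) = (LINT t|lborel. indicator {0<..} t * gN p n N t)"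
proof -
  define P where "P k t = (\<Prod>i\<in>{1..N} - {k}. (1 - exp (- (real i powr p) * t)))" for k t
  have "EU (\<lambda>k. real k powr p) N (Suc n) = (\<Sum>k\<in>{1..N}. LINT t|lborel. indicator {0..} t * (Eg n (real k powr p) t * P k t))"
    unfolding EU_def Eg_def P_def set_lebesgue_integral_def by (simp add: mult_ac)
  also have "\<dots> = (LINT t|lborel. (\<Sum>k\<in>{1..N}. indicator {0..} t * (Eg n (real k powr p) t * P k t)))"
  proof (rule sym, rule Bochner_Integration.integral_sum[where f="\<lambda>k t. indicator {0..} t * (Eg n (real k powr p) t * P k t)"])
    fix k assume k: "k \<in> {1..N}"
    show "integrable lborel (\<lambda>t. indicator {0..} t * (Eg n (real k powr p) t * P k t))"
    proof (rule Bochner_Integration.integrable_bound[OF Eg_integrable])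
      show "0 < real k powr p" using k by simp
      show "(\<lambda>t. indicator {0..} t * (Eg n (real k powr p) t * P k t)) \<in> borel_measurable lborel"
        unfolding P_def by measurable
      show "AE t in lborel. norm (indicator {0..} t * (Eg n (real k powr p) t * P k t))
            \<le> norm (indicator {0..} t * Eg n (real k powr p) t)"
      proof (intro AE_I2)
        fix t :: real
        show "norm (indicator {0..} t * (Eg n (real k powr p) t * P k t))
            \<le> norm (indicator {0..} t * Eg n (real k powr p) t)"
        proof (cases "t \<ge> 0")
          case True
          have "0 \<le> P k t" "P k t \<le> 1" unfolding P_def using True
            by (auto intro!: prod_nonneg prod_le_1 simp: fac01)
          moreover have "0 \<le> Eg n (real k powr p) t" using True by (simp add: Eg_nonneg)
          ultimately show ?thesis using True by (simp add: indicator_def abs_mult mult_left_le)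
        qed (simp add: indicator_def)
      qed
    qed
  qed
  also have "\<dots> = (LINT t|lborel. indicator {0<..} t * gN p n N t)"
  proof (rule Bochner_Integration.integral_cong[OF refl])
    fix t :: real
    have E0: "Eg n l 0 = 0" for l using n unfolding Eg_def by simp
    show "(\<Sum>k\<in>{1..N}. indicator {0..} t * (Eg n (real k powr p) t * P k t)) = indicator {0<..} t * gN p n N t"
      unfolding gN_def P_def sum_distrib_left[symmetric]
      by (cases "t = 0") (auto simp: E0 indicator_def)
  qed
  finally show ?thesis .
qed

lemma SUP_ind:
  fixes f :: "real \<Rightarrow> ennreal"
  assumes inc: "\<And>n. S n \<subseteq> S (Suc n)" and U: "(\<Union>n. S n) = T"
  shows "(SUP n. f x * indicator (S n) x) = f x * indicator T x"
proof (cases "x \<in> T")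
  case True
  then obtain n0 where n0: "x \<in> S n0" using U by auto
  show ?thesis
  proof (rule antisym)
    show "(SUP n. f x * indicator (S n) x) \<le> f x * indicator T x"
      using U by (intro SUP_least) (auto simp: indicator_def)
    have "f x * indicator T x = f x * indicator (S n0) x" using n0 True by simp
    also have "\<dots> \<le> (SUP n. f x * indicator (S n) x)" by (rule SUP_upper) simp
    finally show "f x * indicator T x \<le> (SUP n. f x * indicator (S n) x)" .
  qed
next
  case False
  hence "x \<notin> S n" for n using U by auto
  thus ?thesis using False by simp
qed

lemma nn_SUP_sets:
  fixes f :: "real \<Rightarrow> ennreal"
  assumes f[measurable]: "f \<in> borel_measurable borel"
    and inc: "\<And>n. S n \<subseteq> S (Suc n)" and U: "(\<Union>n. S n) = T"
    and Sm[measurable]: "\<And>n. S n \<in> sets borel"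
  shows "(\<integral>\<^sup>+x. f x * indicator T x \<partial>lborel) = (SUP n. \<integral>\<^sup>+x. f x * indicator (S n) x \<partial>lborel)"
proof -
  have "(\<integral>\<^sup>+x. f x * indicator T x \<partial>lborel) = (\<integral>\<^sup>+x. (SUP n. f x * indicator (S n) x) \<partial>lborel)"
    by (simp add: SUP_ind[OF inc U])
  also have "\<dots> = (SUP n. \<integral>\<^sup>+x. f x * indicator (S n) x \<partial>lborel)"
  proof (rule nn_integral_monotone_convergence_SUP)
    show "incseq (\<lambda>n x. f x * indicator (S n) x)"
    proof (rule incseq_SucI, rule le_funI)
      fix n x
      show "f x * indicator (S n) x \<le> f x * indicator (S (Suc n)) x"
        using inc[of n] by (intro mult_left_mono) (auto simp: indicator_def)
    qed
  qed measurable
  finally show ?thesis .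
qed

definition Tn :: "nat \<Rightarrow> real set" where "Tn n = {1 / real (n+2) .. real (n+2)}"

lemma Tn_inc: "Tn n \<subseteq> Tn (Suc n)"
  unfolding Tn_def by (auto simp: field_simps)

lemma Tn_U: "(\<Union>n. Tn n) = {0<..}"
proof (intro equalityI subsetI)
  fix x assume "x \<in> (\<Union>n. Tn n)"
  then obtain n where "x \<in> Tn n" by auto
  thus "x \<in> {0<..}" unfolding Tn_def by (auto intro: less_le_trans[of 0 "1 / real (n+2)"])
next
  fix x :: real assume x: "x \<in> {0<..}"
  hence x0: "x > 0" by simp
  obtain n where n: "max x (1/x) \<le> real n" using real_arch_simple by blast
  have "1 / real (n+2) \<le> x"
  proof -
    have "1/x \<le> real (n+2)" using n by simp
    thus ?thesis using x0 by (simp add: field_simps)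
  qed
  moreover have "x \<le> real (n+2)" using n by simp
  ultimately show "x \<in> (\<Union>n. Tn n)" unfolding Tn_def by auto
qed

lemma subst_exp:
  fixes \<phi> :: "real \<Rightarrow> ennreal"
  assumes [measurable]: "\<phi> \<in> borel_measurable borel"
  shows "(\<integral>\<^sup>+x. \<phi> x * indicator {0<..<1} x \<partial>lborel)
       = (\<integral>\<^sup>+t. \<phi> (exp (- t)) * ennreal (exp (- t)) * indicator {0<..} t \<partial>lborel)"
proof -
  define S where "S n = {exp (- real (n+2)) .. exp (- (1 / real (n+2)))}" for n
  have Sinc: "S n \<subseteq> S (Suc n)" for n
    unfolding S_def by (auto simp: field_simps)
  have SU: "(\<Union>n. S n) = {0<..<1}"
  proof (intro equalityI subsetI)
    fix x assume "x \<in> (\<Union>n. S n)"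
    then obtain n where xn: "x \<in> S n" by auto
    have b: "exp (- real (n+2)) \<le> x" "x \<le> exp (- (1 / real (n+2)))"
      using xn unfolding S_def by (simp_all only: atLeastAtMost_iff)
    have c1: "exp (- (1 / real (n+2))) < 1" by simp
    have c2: "0 < exp (- real (n+2))" by simp
    show "x \<in> {0<..<1}" unfolding greaterThanLessThan_iff using b c1 c2 by linarith
  next
    fix x :: real assume x: "x \<in> {0<..<1}"
    hence "- ln x \<in> {0<..}" by simp
    hence "- ln x \<in> (\<Union>n. Tn n)" unfolding Tn_U .
    then obtain n where "- ln x \<in> Tn n" by blast
    hence t1: "- real (n+2) \<le> ln x" "ln x \<le> - (1/real(n+2))" unfolding Tn_def by auto
    have x0: "0 < x" using x by simp
    have "exp (- real (n+2)) \<le> x" using t1(1) x0 by (metis exp_le_cancel_iff exp_ln)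
    moreover have "x \<le> exp (- (1 / real (n+2)))" using t1(2) x0 by (metis exp_le_cancel_iff exp_ln)
    ultimately have "x \<in> S n" unfolding S_def by (simp only: atLeastAtMost_iff)
    thus "x \<in> (\<Union>n. S n)" by blast
  qed
  have step: "(\<integral>\<^sup>+x. \<phi> x * indicator (S n) x \<partial>lborel)
      = (\<integral>\<^sup>+t. \<phi> (exp (- t)) * ennreal (exp (- t)) * indicator (Tn n) t \<partial>lborel)" for n
  proof -
    have "(\<integral>\<^sup>+x. \<phi> x * indicator (S n) x \<partial>lborel)
        = (\<integral>\<^sup>+u. \<phi> (exp u) * ennreal (exp u) * indicator {- real (n+2) .. - (1 / real (n+2))} u \<partial>lborel)"
      unfolding S_def
    proof (rule nn_integral_substitution_aux)
      have h1: "1 / real (n+2) \<le> 1" by simp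
      have h2: "2 \<le> real (n+2)" by simp
      show "- real (n+2) < - (1 / real (n+2))" using h1 h2 by linarith
    qed (auto intro!: DERIV_exp continuous_intros)
    also have "\<dots> = ennreal \<bar>-1\<bar> * (\<integral>\<^sup>+t. \<phi> (exp (0 + -1 * t)) * ennreal (exp (0 + -1 * t)) * indicator {- real (n+2) .. - (1 / real (n+2))} (0 + -1 * t) \<partial>lborel)"
      by (rule nn_integral_real_affine) auto
    also have "\<dots> = (\<integral>\<^sup>+t. \<phi> (exp (- t)) * ennreal (exp (- t)) * indicator (Tn n) t \<partial>lborel)"
      unfolding Tn_def by (auto intro!: nn_integral_cong simp: indicator_def)
    finally show ?thesis .
  qed
  have "(\<integral>\<^sup>+x. \<phi> x * indicator {0<..<1} x \<partial>lborel) = (SUP n. \<integral>\<^sup>+x. \<phi> x * indicator (S n) x \<partial>lborel)"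
    by (rule nn_SUP_sets[OF _ Sinc SU]) (auto simp: S_def)
  also have "\<dots> = (SUP n. \<integral>\<^sup>+t. \<phi> (exp (- t)) * ennreal (exp (- t)) * indicator (Tn n) t \<partial>lborel)"
    by (simp add: step)
  also have "\<dots> = (\<integral>\<^sup>+t. \<phi> (exp (- t)) * ennreal (exp (- t)) * indicator {0<..} t \<partial>lborel)"
    by (rule nn_SUP_sets[OF _ Tn_inc Tn_U, symmetric]) (auto simp: Tn_def)
  finally show ?thesis .
qed


lemma Gf_nonneg:
  assumes p: "p > 0" and t: "t > 0"
  shows "0 \<le> Gf p n t"
  by (rule LIMSEQ_le_const[OF g_conv[OF p t]]) (use gN_nonneg t in auto)

lemma main_aux:
  fixes p :: real and n :: nat
  assumes p: "p > 0" and n: "n \<ge> 1"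
  shows "set_integrable lborel {0<..<1} (Iint_integrand (\<lambda>k. real k powr p) (Suc n))"
    and "(LBINT x:{0<..<1}. Iint_integrand (\<lambda>k. real k powr p) (Suc n) x)
           = fact n * (LINT t|lborel. indicator {0<..} t * Gf p n t)"
proof -
  define a where "a = (\<lambda>k. real k powr p)"
  define Fn where "Fn t = indicator {0<..} t * Gf p n t" for t
  have Fn_meas[measurable]: "Fn \<in> borel_measurable borel"
    using Gf_measurable[OF p] unfolding Fn_def by simp
  have Fn_int: "integrable lborel Fn" using DCT(1)[OF p] unfolding Fn_def by simp
  have Fn_nn: "0 \<le> Fn t" for t using Gf_nonneg[OF p] unfolding Fn_def by (simp add: indicator_def)
  define h where "h x = indicator {0<..<1} x * Iint_integrand a (Suc n) x" for x
  have h_eq: "h x = indicator {0<..<1} x * (fact n * Fn (- ln x) / x)" for x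
  proof (cases "x \<in> {0<..<1}")
    case True
    hence x0: "0 < x" "x < 1" by auto
    hence "- ln x > 0" by simp
    moreover have "\<bar>ln x\<bar> = - ln x" using x0 by simp
    ultimately show ?thesis
      unfolding h_def Fn_def Gf_def Iint_integrand_def a_def using x0 by (simp add: indicator_def)
  qed (simp add: h_def)
  have h_meas[measurable]: "h \<in> borel_measurable borel"
    unfolding h_eq[abs_def] by measurable
  have h_nn: "0 \<le> h x" for x unfolding h_eq using Fn_nn by (simp add: indicator_def)
  have "(\<integral>\<^sup>+x. ennreal (h x) \<partial>lborel)
      = (\<integral>\<^sup>+x. ennreal (fact n * Fn (- ln x) / x) * indicator {0<..<1} x \<partial>lborel)"
    by (intro nn_integral_cong) (simp add: h_eq indicator_def)
  also have "\<dots> = (\<integral>\<^sup>+t. ennreal (fact n * Fn (- ln (exp (- t))) / exp (- t)) * ennreal (exp (- t)) * indicator {0<..} t \<partial>lborel)"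
    by (rule subst_exp) measurable
  also have "\<dots> = (\<integral>\<^sup>+t. ennreal (fact n) * ennreal (Fn t) \<partial>lborel)"
  proof (intro nn_integral_cong)
    fix t :: real
    show "ennreal (fact n * Fn (- ln (exp (- t))) / exp (- t)) * ennreal (exp (- t)) * indicator {0<..} t
        = ennreal (fact n) * ennreal (Fn t)"
    proof (cases "t > 0")
      case True
      have "ennreal (fact n * Fn t / exp (- t)) * ennreal (exp (- t)) = ennreal (fact n * Fn t / exp (- t) * exp (- t))"
        using Fn_nn by (intro ennreal_mult[symmetric]) auto
      also have "\<dots> = ennreal (fact n) * ennreal (Fn t)" using Fn_nn by (simp add: ennreal_mult)
      finally show ?thesis using True by simp
    next
      case False thus ?thesis by (simp add: Fn_def)
    qed
  qed
  also have "\<dots> = ennreal (fact n) * (\<integral>\<^sup>+t. ennreal (Fn t) \<partial>lborel)"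
    by (intro nn_integral_cmult) measurable
  also have "\<dots> = ennreal (fact n) * ennreal (integral\<^sup>L lborel Fn)"
    using Fn_int Fn_nn by (subst nn_integral_eq_integral) auto
  also have "\<dots> = ennreal (fact n * integral\<^sup>L lborel Fn)"
    using Fn_int Fn_nn by (simp add: ennreal_mult integral_nonneg_AE)
  finally have NN: "(\<integral>\<^sup>+x. ennreal (h x) \<partial>lborel) = ennreal (fact n * integral\<^sup>L lborel Fn)" .
  have h_int: "integrable lborel h"
    by (rule integrableI_nonneg) (use h_nn NN in auto)
  show "set_integrable lborel {0<..<1} (Iint_integrand (\<lambda>k. real k powr p) (Suc n))"
    unfolding set_integrable_def using h_int unfolding h_def a_def by simp
  have "ennreal (integral\<^sup>L lborel h) = ennreal (fact n * integral\<^sup>L lborel Fn)"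
    using NN h_int h_nn by (subst nn_integral_eq_integral[symmetric]) auto
  hence "integral\<^sup>L lborel h = fact n * integral\<^sup>L lborel Fn"
    using h_nn Fn_nn by (subst (asm) ennreal_inj) (auto intro!: integral_nonneg_AE)
  thus "(LBINT x:{0<..<1}. Iint_integrand (\<lambda>k. real k powr p) (Suc n) x)
           = fact n * (LINT t|lborel. indicator {0<..} t * Gf p n t)"
    unfolding set_lebesgue_integral_def h_def a_def Fn_def by simp
qed

theorem mainTheorem12:
  fixes p :: real and j :: nat
  assumes "p > 0" and "j \<ge> 2"
  shows "set_integrable lborel {0<..<x_alpha (\<lambda>k. real k powr p)}
           (Iint_integrand (\<lambda>k. real k powr p) j)
         \<and> (\<lambda>N. EU (\<lambda>k. real k powr p) N j) \<longlonglongrightarrow> Iint (\<lambda>k. real k powr p) j"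
proof -
  obtain n where jn: "j = Suc n" and n: "n \<ge> 1" using assms(2) by (cases j) auto
  note p = assms(1)
  have xa: "x_alpha (\<lambda>k. real k powr p) = 1" by (rule x_alpha_eq[OF p])
  have I: "Iint (\<lambda>k. real k powr p) j = (LINT t|lborel. indicator {0<..} t * Gf p n t)"
    unfolding Iint_def xa jn using main_aux(2)[OF p n] by simp
  show ?thesis
    unfolding xa I
    using main_aux(1)[OF p n] DCT(2)[OF p, of n] EU_eq[OF p n] unfolding jn by simp
qed

end
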